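(* Let $0<q<1/2$, $p=1-q$, $s=4pq$, and let $I_x(a,b)=\frac{\Gamma(a+b)}{\Gamma(a)\Gamma(b)}\int_0^xt^{a-1}(1-t)^{b-1}\,dt$. For every real $z>1$, $$\sqrt{\frac{z}{z+\frac12}}\cdot\frac{s^z}{\sqrt{\pi z}}\le I_s(z,1/2)\le\frac{1}{\sqrt{1-s}}\cdot\frac{s^z}{\sqrt{\pi z}}.$$
   Context: For integers $z\ge1$, $I_s(z,1/2)$ equals the probability $P(z)=1-\sum_{k=0}^{z-1}(p^zq^k-q^zp^k)\binom{k+z-1}{k}$ of success of a double-spend attack after $z$ confirmations. *)

theory Defs
  imports "HOL-Analysis.Analysis"
begin

definition reg_inc_beta :: "real \<Rightarrow> real \<Rightarrow> real \<Rightarrow> real" where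
  "reg_inc_beta x a b =
     Gamma (a + b) / (Gamma a * Gamma b) *
     integral {0..x} (\<lambda>t. t powr (a - 1) * (1 - t) powr (b - 1))"

end

theory Submission
  imports Defs
begin

lemma gamma_half_le:
  fixes y :: real assumes y: "y > 0"
  shows "Gamma (y + 1/2) \<le> sqrt y * Gamma y"
proof -
  have c: "convex_on {0<..} (ln \<circ> Gamma :: real \<Rightarrow> real)" by (rule log_convex_Gamma_real)
  have "(ln \<circ> Gamma) ((1 - 1/2) *\<^sub>R y + (1/2) *\<^sub>R (y+1)) \<le> (1 - 1/2) * (ln \<circ> Gamma) y + (1/2) * (ln \<circ> Gamma) (y+1)"
    by (rule convex_onD[OF c]) (use y in auto)
  moreover have "(1 - 1/2) *\<^sub>R y + (1/2) *\<^sub>R (y+1) = y + 1/2" by (simp add: field_simps)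
  moreover have "Gamma (y+1) = y * Gamma y"
    using y by (subst Gamma_plus1) (auto simp: nonpos_Ints_def)
  ultimately have "ln (Gamma (y + 1/2)) \<le> ln (Gamma y) / 2 + ln (y * Gamma y) / 2" by simp
  also have "\<dots> = ln (sqrt y * Gamma y)"
    using y by (simp add: ln_mult ln_sqrt field_simps)
  finally show ?thesis
    using y by (subst (asm) ln_le_cancel_iff) (auto intro: Gamma_real_pos)
qed

lemma gamma_half_ge:
  fixes x :: real assumes x: "x > 0"
  shows "x * Gamma x \<le> sqrt (x + 1/2) * Gamma (x + 1/2)"
proof -
  have "Gamma (x + 1/2 + 1/2) \<le> sqrt (x+1/2) * Gamma (x+1/2)"
    using x by (intro gamma_half_le) auto
  moreover have "Gamma (x + 1/2 + 1/2) = x * Gamma x"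
    using x by (simp add: add.assoc Gamma_plus1 nonpos_Ints_def)
  ultimately show ?thesis by simp
qed

theorem mainTheorem14:
  fixes q p s z :: real
  assumes "0 < q" and "q < 1/2"
    and "p = 1 - q" and "s = 4 * p * q"
    and "z > 1"
  shows "sqrt (z / (z + 1/2)) * (s powr z / sqrt (pi * z)) \<le> reg_inc_beta s z (1/2)
       \<and> reg_inc_beta s z (1/2) \<le> 1 / sqrt (1 - s) * (s powr z / sqrt (pi * z))"
proof -
  have s0: "s > 0" using assms by (simp add: mult_pos_pos)
  have s1: "s < 1"
  proof -
    have "s = 4 * (1 - q) * q" using assms by simp
    also have "\<dots> = 1 - (1 - 2*q)^2" by (simp add: power2_eq_square algebra_simps)
    finally have "s = 1 - (1 - 2*q)^2" .
    moreover have "(1 - 2*q)^2 > 0" using assms by simp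
    ultimately show ?thesis by simp
  qed
  define f where "f = (\<lambda>t::real. t powr (z - 1) * (1 - t) powr (1/2 - 1))"
  define J where "J = integral {0..s} f"
  have g: "((\<lambda>t. t powr (z - 1)) has_integral (s powr z / z)) {0..s}"
    using has_integral_powr_from_0[of "z-1" s] assms s0 by simp
  have gint: "(\<lambda>t. t powr (z - 1)) integrable_on {0..s}" using g by blast
  have fcont: "continuous_on {0..s} f"
    unfolding f_def
    by (intro continuous_intros continuous_on_powr') (use assms s1 in auto)
  have fint: "f integrable_on {0..s}"
    using fcont by (rule integrable_continuous_real)
  have hform: "(1 - t) powr (1/2 - 1) = 1 / sqrt (1 - t)" if "t < 1" for t :: real
  proof -
    have "(1 - t) powr (1/2 - 1) = (1 - t) powr (- (1/2))" by simp
    also have "\<dots> = 1 / (1 - t) powr (1/2)" by (simp add: powr_minus_divide)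
    also have "\<dots> = 1 / sqrt (1 - t)" using that by (simp add: powr_half_sqrt)
    finally show ?thesis .
  qed
  have lowJ: "s powr z / z \<le> J"
  proof -
    have "integral {0..s} (\<lambda>t. t powr (z - 1)) \<le> J"
      unfolding J_def
    proof (rule integral_le[OF gint fint])
      fix t assume t: "t \<in> {0..s}"
      have "sqrt (1 - t) \<le> 1" using t s1 by simp
      moreover have "sqrt (1 - t) > 0" using t s1 by simp
      ultimately have "1 \<le> 1 / sqrt (1 - t)" by simp
      then have "1 \<le> (1 - t) powr (1/2 - 1)" using hform[of t] t s1 by simp
      then show "t powr (z - 1) \<le> f t"
        unfolding f_def by (simp add: mult_le_cancel_left1)
    qed
    then show ?thesis using g by (simp add: integral_unique)
  qed
  have upJ: "J \<le> (s powr z / z) / sqrt (1 - s)"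
  proof -
    have "J \<le> integral {0..s} (\<lambda>t. t powr (z - 1) / sqrt (1 - s))"
      unfolding J_def
    proof (rule integral_le[OF fint])
      show "(\<lambda>t. t powr (z - 1) / sqrt (1 - s)) integrable_on {0..s}"
        using gint by (rule integrable_on_divide)
      fix t assume t: "t \<in> {0..s}"
      have "sqrt (1 - s) \<le> sqrt (1 - t)" using t by simp
      moreover have "sqrt (1 - s) > 0" using s1 by simp
      ultimately have "1 / sqrt (1 - t) \<le> 1 / sqrt (1 - s)"
        by (simp add: frac_le)
      then have "(1 - t) powr (1/2 - 1) \<le> 1 / sqrt (1 - s)" using hform[of t] t s1 by simp
      then show "f t \<le> t powr (z - 1) / sqrt (1 - s)"
      proof -
        have "t powr (z - 1) * (1 - t) powr (1/2 - 1) \<le> t powr (z - 1) * (1 / sqrt (1 - s))"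
          by (rule mult_left_mono) (use \<open>(1 - t) powr (1/2 - 1) \<le> 1 / sqrt (1 - s)\<close> in auto)
        then show ?thesis by (simp add: f_def)
      qed
    qed
    also have "\<dots> = (s powr z / z) / sqrt (1 - s)"
      using g by (simp add: integral_unique)
    finally show ?thesis .
  qed
  define G where "G = Gamma (z + 1/2) / (Gamma z * Gamma (1/2))"
  have reg: "reg_inc_beta s z (1/2) = G * J"
    unfolding reg_inc_beta_def G_def J_def f_def by simp
  have Gz: "Gamma z > 0" using assms by simp
  have G1: "z / (sqrt (z + 1/2) * sqrt pi) \<le> G"
  proof -
    have "z * Gamma z \<le> sqrt (z + 1/2) * Gamma (z + 1/2)" using assms by (intro gamma_half_ge) auto
    moreover have sq: "sqrt (z + 1/2) > 0" using assms by simp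
    ultimately have h: "z * Gamma z / sqrt (z + 1/2) \<le> Gamma (z + 1/2)"
      by (simp add: pos_divide_le_eq mult.commute)
    have "z / (sqrt (z + 1/2) * sqrt pi) = (z * Gamma z / sqrt (z + 1/2)) / (Gamma z * sqrt pi)"
      using Gz by simp
    also have "\<dots> \<le> Gamma (z + 1/2) / (Gamma z * sqrt pi)"
      by (rule divide_right_mono[OF h]) (use Gz in simp)
    finally show ?thesis unfolding G_def Gamma_one_half_real .
  qed
  have G2: "G \<le> sqrt z / sqrt pi"
  proof -
    have "Gamma (z + 1/2) \<le> sqrt z * Gamma z" using assms by (intro gamma_half_le) auto
    then show ?thesis unfolding G_def Gamma_one_half_real using Gz
      by (simp add: field_simps)
  qed
  have sz: "s powr z > 0" using s0 by simp
  have J0: "J \<ge> 0" using lowJ sz assms by (smt (verit) divide_pos_pos)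
  have G0: "G \<ge> 0" unfolding G_def using Gz assms by simp
  have "z / (sqrt (z + 1/2) * sqrt pi) * (s powr z / z) \<le> G * J"
    by (rule mult_mono[OF G1 lowJ]) (use assms sz G0 in auto)
  moreover have "sqrt (z / (z + 1/2)) * (s powr z / sqrt (pi * z)) = z / (sqrt (z + 1/2) * sqrt pi) * (s powr z / z)"
  proof -
    have "sqrt z * sqrt z = z" using assms by simp
    then show ?thesis using assms
      by (simp add: real_sqrt_divide real_sqrt_mult field_simps)
  qed
  moreover have "G * J \<le> sqrt z / sqrt pi * ((s powr z / z) / sqrt (1 - s))"
    by (rule mult_mono[OF G2 upJ]) (use J0 G0 assms in auto)
  moreover have "sqrt z / sqrt pi * ((s powr z / z) / sqrt (1 - s)) = 1 / sqrt (1 - s) * (s powr z / sqrt (pi * z))"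
  proof -
    have "sqrt z * sqrt z = z" using assms by simp
    then show ?thesis using assms s1
      by (simp add: real_sqrt_mult field_simps)
  qed
  ultimately show ?thesis using reg by simp
qed

end
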